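(* Let $l:\mathbb{R}^p\to\mathbb{R}$ be convex and differentiable, let $\lambda_1\ge\dots\ge\lambda_p\ge0$ be arbitrary, and let $\hat b$ be a minimizer of $l(b)+\sum_{i=1}^p\lambda_i|b|_{(i)}$. Let $U(b)=-\nabla l(b)$. If $|\hat b_j|>|\hat b_k|$, then $|U_j(\hat b)|\ge|U_k(\hat b)|$.
   Context: $|b|_{(1)}\ge\dots\ge|b|_{(p)}$ denote the ordered absolute values of the entries of $b\in\mathbb{R}^p$. *)

theory Defs
  imports "HOL-Analysis.Analysis" "HOL-Library.Multiset"
begin

text \<open>Ordered absolute values of a vector b in R^p, largest first:
  ordered_abs b ! 0 = |b|_(1) >= ... >= ordered_abs b ! (p-1) = |b|_(p).\<close>
definition ordered_abs :: "real ^ 'p \<Rightarrow> real list" where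
  "ordered_abs b = rev (sorted_list_of_multiset (image_mset (\<lambda>j. \<bar>b $ j\<bar>) (mset_set (UNIV :: 'p set))))"

text \<open>Sorted-L1 (SLOPE) penalty  sum_{i=1}^p lambda_i |b|_(i), with lambda_i stored as lam (i-1).\<close>
definition slope_pen :: "(nat \<Rightarrow> real) \<Rightarrow> real ^ 'p \<Rightarrow> real" where
  "slope_pen lam b = (\<Sum>i<CARD('p). lam i * ordered_abs b ! i)"

end

theory Submission
  imports Defs
begin

lemma sum_update:
  fixes f :: "nat \<Rightarrow> real"
  assumes "q < length xs" "length xs = n"
  shows "(\<Sum>i<n. f i * xs[q:=v]!i) = (\<Sum>i<n. f i * xs!i) + f q * (v - xs!q)"
proof -
  have "(\<Sum>i<n. f i * xs[q:=v]!i) = (\<Sum>i<n. f i * xs!i + (if i = q then f q * (v - xs!q) else 0))"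
    using assms by (intro sum.cong) (auto simp: nth_list_update algebra_simps)
  also have "\<dots> = (\<Sum>i<n. f i * xs!i) + f q * (v - xs!q)"
    using assms by (simp add: sum.distrib algebra_simps)
  finally show ?thesis .
qed

lemma two_pos:
  "add_mset u (add_mset w M) = mset xs \<Longrightarrow> \<exists>P Q. P < length xs \<and> Q < length xs \<and> P \<noteq> Q \<and> xs!P = u \<and> xs!Q = w"
proof (induction xs arbitrary: M)
  case Nil then show ?case by simp
next
  case (Cons a xs)
  show ?case
  proof (cases "a = u")
    case True
    with Cons.prems have "add_mset w M = mset xs" by simp
    then have "w \<in> set xs" by (metis in_multiset_in_set union_single_eq_member)
    then obtain Q where "Q < length xs" "xs!Q = w" by (metis in_set_conv_nth)
    then show ?thesis using True by (intro exI[of _ 0] exI[of _ "Suc Q"]) auto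
  next
    case F1: False
    show ?thesis
    proof (cases "a = w")
      case True
      with Cons.prems have "add_mset u M = mset xs" by (simp add: add_mset_commute)
      then have "u \<in> set xs" by (metis in_multiset_in_set union_single_eq_member)
      then obtain P where "P < length xs" "xs!P = u" by (metis in_set_conv_nth)
      then show ?thesis using True by (intro exI[of _ "Suc P"] exI[of _ 0]) auto
    next
      case False
      have "a \<in># add_mset u (add_mset w M)" using Cons.prems by simp
      with F1 False have "a \<in># M" by simp
      then obtain M0 where M: "M = add_mset a M0" by (metis mset_add)
      with Cons.prems have "add_mset u (add_mset w M0) = mset xs" 
        by (simp add: add_mset_commute)
      from Cons.IH[OF this] obtain P Q where "P < length xs \<and> Q < length xs \<and> P \<noteq> Q \<and> xs!P = u \<and> xs!Q = w" by blast
      then show ?thesis by (intro exI[of _ "Suc P"] exI[of _ "Suc Q"]) auto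
    qed
  qed
qed

lemma rearr:
  fixes s c :: "real list"
  assumes "mset c = mset s" "sorted_wrt (\<ge>) s"
    "\<And>i i'. i \<le> i' \<Longrightarrow> i' < length s \<Longrightarrow> lam i' \<le> lam i"
  shows "(\<Sum>i<length s. lam i * c!i) \<le> (\<Sum>i<length s. lam i * s!i)"
  using assms
proof (induction s arbitrary: c lam)
  case Nil then show ?case by simp
next
  case (Cons x s)
  from Cons.prems(1) obtain y cs where c: "c = y # cs"
    by (cases c) auto
  have xmax: "\<forall>z\<in>set s. z \<le> x" using Cons.prems(2) by simp
  have ss: "sorted_wrt (\<ge>) s" using Cons.prems(2) by simp
  have lm: "\<And>i i'. i \<le> i' \<Longrightarrow> i' < length s \<Longrightarrow> lam (Suc i') \<le> lam (Suc i)"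
    using Cons.prems(3) by simp
  have len: "length cs = length s" using Cons.prems(1) c by (metis length_Cons mset_eq_length nat.inject)
  have ym: "y \<in> set (x # s)" using Cons.prems(1) c by (metis list.set_intros(1) set_mset_mset)
  hence yx: "y \<le> x" using xmax by auto
  have shift: "\<And>zs. (\<Sum>i<length (x#s). lam i * zs!i) = lam 0 * zs!0 + (\<Sum>i<length s. lam (Suc i) * zs!(Suc i))"
    unfolding length_Cons sum.lessThan_Suc_shift by simp
  show ?case
  proof (cases "y = x")
    case True
    hence "mset cs = mset s" using Cons.prems(1) c by simp
    from Cons.IH[OF this ss lm] show ?thesis using c True by (simp only: shift) simp
  next
    case False
    have "x \<in> set c" using Cons.prems(1) by (metis list.set_intros(1) set_mset_mset)
    with False c have "x \<in> set cs" by auto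
    then obtain q where q: "q < length cs" "cs!q = x" by (metis in_set_conv_nth)
    let ?cs2 = "cs[q := y]"
    have "mset ?cs2 = add_mset y (mset cs - {#x#})" using q by (simp add: mset_update)
    also have "mset cs = add_mset x (mset s) - {#y#}" using Cons.prems(1) c
      by (metis add_mset_remove_trivial mset.simps(2))
    finally have m1: "mset ?cs2 = add_mset y (add_mset x (mset s) - {#y#} - {#x#})" .
    have "y \<in># mset s" using ym False by simp
    then obtain S0 where S0: "mset s = add_mset y S0" by (metis mset_add)
    have m2: "mset ?cs2 = mset s" using m1 False unfolding S0
      by (simp add: add_mset_commute)
    have IH: "(\<Sum>i<length s. lam (Suc i) * ?cs2!i) \<le> (\<Sum>i<length s. lam (Suc i) * s!i)"
      by (rule Cons.IH[OF m2 ss lm])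
    have eq: "(\<Sum>i<length s. lam (Suc i) * cs!i) = (\<Sum>i<length s. lam (Suc i) * ?cs2!i) + lam (Suc q) * (x - y)"
    proof -
      have h: "(\<Sum>i<length s. lam (Suc i) * ?cs2!i) = (\<Sum>i<length s. lam (Suc i) * cs!i) + lam (Suc q) * (y - x)"
        using sum_update[of q cs "length s" "\<lambda>i. lam (Suc i)" y] q len by simp
      have "lam (Suc q) * (y - x) = - (lam (Suc q) * (x - y))" by (simp add: algebra_simps)
      then show ?thesis using h by linarith
    qed
    have "lam (Suc q) \<le> lam 0" using Cons.prems(3)[of 0 "Suc q"] q len by simp
    hence "lam (Suc q) * (x - y) \<le> lam 0 * (x - y)" using yx by (simp add: mult_right_mono)
    moreover have "lam 0 * (x - y) = lam 0 * x - lam 0 * y" by (simp add: right_diff_distrib)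
    ultimately have "lam 0 * y + (\<Sum>i<length s. lam (Suc i) * cs!i) \<le> lam 0 * x + (\<Sum>i<length s. lam (Suc i) * s!i)"
      using IH eq by linarith
    then show ?thesis unfolding shift c by simp
  qed
qed

lemma oa_mset: "mset (ordered_abs b) = image_mset (\<lambda>j. \<bar>b $ j\<bar>) (mset_set UNIV)"
  by (simp add: ordered_abs_def)

lemma oa_len: "length (ordered_abs (b :: real ^ 'p)) = CARD('p)"
  by (metis oa_mset size_image_mset size_mset size_mset_set)

lemma oa_sorted: "sorted_wrt (\<ge>) (ordered_abs b)"
  by (simp add: ordered_abs_def sorted_wrt_rev)

lemma mset_UNIV_split:
  assumes "(j::'p::finite) \<noteq> k"
  shows "mset_set (UNIV :: 'p set) = add_mset j (add_mset k (mset_set (UNIV - {j,k})))"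
proof -
  have "(UNIV :: 'p set) = insert j (insert k (UNIV - {j,k}))" by auto
  hence "mset_set (UNIV :: 'p set) = mset_set (insert j (insert k (UNIV - {j,k})))" by simp
  also have "\<dots> = add_mset j (add_mset k (mset_set (UNIV - {j,k})))"
    using assms by simp
  finally show ?thesis .
qed

lemma pen_transfer:
  fixes b b' :: "real ^ 'p" and lam :: "nat \<Rightarrow> real"
  assumes jk: "j \<noteq> k" and same: "\<And>i. i \<noteq> j \<Longrightarrow> i \<noteq> k \<Longrightarrow> b' $ i = b $ i"
    and vj: "\<bar>b' $ j\<bar> = \<bar>b $ j\<bar> - t" and vk: "\<bar>b' $ k\<bar> \<le> \<bar>b $ k\<bar> + t"
    and t0: "0 \<le> t" and t1: "t \<le> \<bar>b $ j\<bar> - \<bar>b $ k\<bar>"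
    and lam_mono: "\<And>i i'. i \<le> i' \<Longrightarrow> i' < CARD('p) \<Longrightarrow> lam i' \<le> lam i"
    and lam_nonneg: "\<And>i. i < CARD('p) \<Longrightarrow> 0 \<le> lam i"
  shows "slope_pen lam b' \<le> slope_pen lam b"
proof -
  define s where "s = ordered_abs b"
  define s' where "s' = ordered_abs b'"
  define n where "n = CARD('p)"
  define R where "R = image_mset (\<lambda>i. \<bar>b $ i\<bar>) (mset_set (UNIV - {j,k}))"
  define aj where "aj = \<bar>b $ j\<bar>"
  define ak where "ak = \<bar>b $ k\<bar>"
  define uj where "uj = \<bar>b' $ j\<bar>"
  define uk where "uk = \<bar>b' $ k\<bar>"
  have R': "image_mset (\<lambda>i. \<bar>b' $ i\<bar>) (mset_set (UNIV - {j,k})) = R"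
    unfolding R_def by (rule image_mset_cong) (simp add: same)
  have ms: "mset s = add_mset aj (add_mset ak R)"
    unfolding s_def oa_mset mset_UNIV_split[OF jk] R_def aj_def ak_def by simp
  have ms': "mset s' = add_mset uj (add_mset uk R)"
    unfolding s'_def oa_mset mset_UNIV_split[OF jk] R'[symmetric] uj_def uk_def by simp
  have len: "length s = n" "length s' = n" unfolding s_def s'_def n_def by (simp_all add: oa_len)
  have len_eq: "length s' = length s" using len by simp
  have sor: "sorted_wrt (\<ge>) s" unfolding s_def by (rule oa_sorted)
  have lm: "\<And>i i'. i \<le> i' \<Longrightarrow> i' < length s \<Longrightarrow> lam i' \<le> lam i"
    using lam_mono len n_def by simp
  obtain P Q where PQ: "P < n" "Q < n" "P \<noteq> Q" "s'!P = uj" "s'!Q = uk"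
    using two_pos[OF ms'[symmetric]] len by auto
  have pen: "\<And>x :: real ^ 'p. slope_pen lam x = (\<Sum>i<n. lam i * ordered_abs x ! i)"
    unfolding slope_pen_def n_def by simp
  have ujv: "uj = aj - t" using vj uj_def aj_def by simp
  have ukv: "uk \<le> ak + t" using vk uk_def ak_def by simp
  have lP: "0 \<le> lam P" "0 \<le> lam Q" using lam_nonneg PQ n_def by auto
  obtain c where c: "mset c = mset s" "length c = n"
    "(\<Sum>i<n. lam i * s'!i) \<le> (\<Sum>i<n. lam i * c!i)"
  proof (cases "P < Q")
    case True
    let ?c = "s'[P := aj, Q := ak]"
    have m: "mset ?c = mset s" using PQ len
      by (simp add: mset_update ms' ms nth_list_update add_mset_commute)
    have l: "length ?c = n" using len by simp
    have "(\<Sum>i<n. lam i * s'!i) \<le> (\<Sum>i<n. lam i * ?c!i)"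
    proof -
      have "(\<Sum>i<n. lam i * ?c!i) = (\<Sum>i<n. lam i * s'!i) + lam P * (aj - uj) + lam Q * (ak - uk)"
      using sum_update[of Q "s'[P := aj]" n lam ak] sum_update[of P s' n lam aj] PQ len
      by (simp add: nth_list_update)
      moreover have "lam Q * (ak - uk) \<ge> lam Q * (- t)" using lP ukv by (intro mult_left_mono) auto
    moreover have "lam Q * t \<le> lam P * t" using lam_mono[of P Q] True PQ t0 n_def
      by (intro mult_right_mono) auto
    moreover have "lam P * (aj - uj) = lam P * t" using ujv by simp
    moreover have "lam Q * (- t) = - (lam Q * t)" by simp
      ultimately show ?thesis by linarith
    qed
    from m l this show ?thesis by (rule that)
  next
    case False
    hence QP: "Q < P" using PQ by simp
    let ?c = "s'[Q := aj, P := ak]"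
    have m: "mset ?c = mset s" using PQ len
      by (simp add: mset_update ms' ms nth_list_update add_mset_commute)
    have l: "length ?c = n" using len by simp
    have "(\<Sum>i<n. lam i * s'!i) \<le> (\<Sum>i<n. lam i * ?c!i)"
    proof -
      have "(\<Sum>i<n. lam i * ?c!i) = (\<Sum>i<n. lam i * s'!i) + lam Q * (aj - uk) + lam P * (ak - uj)"
      using sum_update[of P "s'[Q := aj]" n lam ak] sum_update[of Q s' n lam aj] PQ len
      by (simp add: nth_list_update)
      moreover have "lam Q * (aj - uk) \<ge> lam Q * (aj - ak - t)" using lP ukv by (intro mult_left_mono) auto
    moreover have "lam P * (aj - ak - t) \<le> lam Q * (aj - ak - t)" using lam_mono[of Q P] QP PQ t1 n_def
      by (intro mult_right_mono) (auto simp: aj_def ak_def)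
    moreover have "lam P * (ak - uj) = - (lam P * (aj - ak - t))" unfolding ujv by (simp add: algebra_simps)
      ultimately show ?thesis by linarith
    qed
    from m l this show ?thesis by (rule that)
  qed
  have "(\<Sum>i<length s. lam i * c!i) \<le> (\<Sum>i<length s. lam i * s!i)"
    by (rule rearr[OF c(1) sor lm])
  then show ?thesis using c(3) len unfolding pen s_def s'_def by simp
qed

theorem proposition3:
  fixes l :: "real ^ 'p \<Rightarrow> real"
    and grad :: "real ^ 'p \<Rightarrow> real ^ 'p"
    and lam :: "nat \<Rightarrow> real"
    and bhat :: "real ^ 'p"
    and j k :: 'p
  assumes convex: "convex_on UNIV l"
    and grad: "\<And>b. (l has_derivative (\<lambda>h. grad b \<bullet> h)) (at b)"
    and lam_mono: "\<And>i i'. i \<le> i' \<Longrightarrow> i' < CARD('p) \<Longrightarrow> lam i' \<le> lam i"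
    and lam_nonneg: "\<And>i. i < CARD('p) \<Longrightarrow> 0 \<le> lam i"
    and minimizer: "\<And>b. l bhat + slope_pen lam bhat \<le> l b + slope_pen lam b"
    and gt: "\<bar>bhat $ j\<bar> > \<bar>bhat $ k\<bar>"
  shows "\<bar>(- grad bhat) $ j\<bar> \<ge> \<bar>(- grad bhat) $ k\<bar>"
proof (rule ccontr)
  define g where "g = grad bhat"
  assume "\<not> ?thesis"
  hence gjk: "\<bar>g $ j\<bar> < \<bar>g $ k\<bar>" unfolding g_def by simp
  have jk: "j \<noteq> k" using gt by auto
  define e :: "real ^ 'p" where "e = (- sgn (bhat $ j)) *\<^sub>R axis j (1::real) + (- sgn (g $ k)) *\<^sub>R axis k 1"
  have ej: "e $ j = - sgn (bhat $ j)" and ek: "e $ k = - sgn (g $ k)"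
    and eo: "\<And>i. i \<noteq> j \<Longrightarrow> i \<noteq> k \<Longrightarrow> e $ i = 0"
    using jk by (auto simp: e_def axis_def)
  define D where "D = g \<bullet> e"
  have De: "D = - sgn (bhat $ j) * g $ j - sgn (g $ k) * g $ k"
    unfolding D_def e_def by (simp add: inner_add_right inner_axis algebra_simps)
  have gk0: "g $ k \<noteq> 0" using gjk by auto
  have "- sgn (bhat $ j) * g $ j \<le> \<bar>g $ j\<bar>"
    by (cases "bhat $ j > 0"; cases "bhat $ j < 0") auto
  moreover have "sgn (g $ k) * g $ k = \<bar>g $ k\<bar>"
    by (cases "g $ k > 0") (auto simp: sgn_if)
  ultimately have Dneg: "D < 0" using De gjk by linarith
  have d1: "((\<lambda>t. bhat + t *\<^sub>R e) has_derivative (\<lambda>h. h *\<^sub>R e)) (at 0)"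
    by (auto intro!: derivative_eq_intros)
  have d2: "(l has_derivative (\<lambda>h. g \<bullet> h)) (at ((\<lambda>t::real. bhat + t *\<^sub>R e) 0))"
    using grad[of bhat] unfolding g_def by simp
  have "((l \<circ> (\<lambda>t. bhat + t *\<^sub>R e)) has_derivative ((\<lambda>h. g \<bullet> h) \<circ> (\<lambda>h. h *\<^sub>R e))) (at 0)"
    by (rule diff_chain_at[OF d1 d2])
  moreover have "((\<lambda>h. g \<bullet> h) \<circ> (\<lambda>h. h *\<^sub>R e)) = (*) D"
    by (auto simp: D_def fun_eq_iff)
  ultimately have "((\<lambda>t. l (bhat + t *\<^sub>R e)) has_real_derivative D) (at 0)"
    by (simp add: has_field_derivative_def comp_def)
  from DERIV_neg_dec_right[OF this Dneg] obtain d where d: "d > 0"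
    "\<And>h. h > 0 \<Longrightarrow> h < d \<Longrightarrow> l (bhat + (0 + h) *\<^sub>R e) < l (bhat + 0 *\<^sub>R e)" by blast
  define t where "t = min (d/2) (\<bar>bhat $ j\<bar> - \<bar>bhat $ k\<bar>)"
  have t0: "t > 0" "t < d" "t \<le> \<bar>bhat $ j\<bar> - \<bar>bhat $ k\<bar>" using d gt by (auto simp: t_def)
  define b' where "b' = bhat + t *\<^sub>R e"
  have lt: "l b' < l bhat" using d(2)[of t] t0 unfolding b'_def by simp
  have bj0: "bhat $ j \<noteq> 0" using gt by auto
  have vj: "\<bar>b' $ j\<bar> = \<bar>bhat $ j\<bar> - t"
    using bj0 t0 unfolding b'_def by (cases "bhat $ j > 0") (auto simp: ej sgn_if)
  have vk: "\<bar>b' $ k\<bar> \<le> \<bar>bhat $ k\<bar> + t"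
    using t0 unfolding b'_def by (cases "g $ k > 0") (auto simp: ek sgn_if)
  have same: "\<And>i. i \<noteq> j \<Longrightarrow> i \<noteq> k \<Longrightarrow> b' $ i = bhat $ i"
    unfolding b'_def by (simp add: eo)
  have "slope_pen lam b' \<le> slope_pen lam bhat"
    by (rule pen_transfer[OF jk same vj vk _ t0(3) lam_mono lam_nonneg]) (use t0 in auto)
  with lt minimizer[of b'] show False by linarith
qed

end
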